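(* Let $k$ be a positive integer and $p\geq 3$ a prime such that $p^{2}(p-1)\mid k$, and let $r\in\{1,\ldots,p-2\}$. Then there are infinitely many positive integers $n$ such that $$\nu_{p}\big(A_{p,k-r}(n)\big)\geq \nu_{p}(k).$$
   Context: For an integer $m\geq 2$ and a positive integer $k$, the integers $A_{m,k}(n)$, $n\in\mathbb{N}=\{0,1,2,\ldots\}$, are defined by the formal power series identity $\prod_{i=0}^{\infty}\big(1-x^{m^{i}}\big)^{-k}=\sum_{n=0}^{\infty}A_{m,k}(n)x^{n}$. For a prime $p$, $\nu_p(n)$ denotes the $p$-adic valuation of the integer $n$, with $\nu_p(0)=+\infty$. *)

theory Defs
  imports "HOL-Computational_Algebra.Computational_Algebra" "HOL-Library.Extended_Nat"
begin

text \<open>(1 - x^a)^(-1) = \<Sum>_j x^(a j) as an integer power series (a \<ge> 1).\<close>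
definition geom_inv :: "nat \<Rightarrow> int fps" where
  "geom_inv a = Abs_fps (\<lambda>j. if a dvd j then 1 else 0)"

definition partial_prod :: "nat \<Rightarrow> nat \<Rightarrow> int fps" where
  "partial_prod m N = (\<Prod>i<N. geom_inv (m ^ i))"

text \<open>A_{m,k}(n): coefficient of x^n in \<Prod>_{i\<ge>0} (1 - x^(m^i))^(-k).
  Since m \<ge> 2, the factors with i > n equal 1 modulo x^(n+1), so the
  coefficient of x^n of the infinite product equals that of the product over i \<le> n.\<close>
definition A :: "nat \<Rightarrow> nat \<Rightarrow> nat \<Rightarrow> int" where
  "A m k n = fps_nth ((partial_prod m (Suc n)) ^ k) n"

definition nu :: "nat \<Rightarrow> int \<Rightarrow> enat" where
  "nu p x = (if x = 0 then \<infinity> else enat (multiplicity (int p) x))"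

end

theory Submission imports Defs begin
lemma geom_inv_mult: assumes "a \<ge> 1" shows "geom_inv a * (1 - fps_X^a) = 1"
proof (rule fps_ext)
  fix n
  have "geom_inv a * (1 - fps_X^a) = geom_inv a - fps_X^a * geom_inv a" by (simp add: algebra_simps)
  moreover have "(geom_inv a - fps_X^a * geom_inv a) $ n = (1::int fps) $ n"
  proof (cases "n < a")
    case True then show ?thesis using assms
      by (auto simp: geom_inv_def fps_X_power_mult_nth dest: dvd_imp_le)
  next
    case False
    have "n = (n - a) + a" using False by simp
    hence "a dvd n \<longleftrightarrow> a dvd (n - a)" by (metis dvd_add_triv_right_iff)
    then show ?thesis using assms False
      by (auto simp: geom_inv_def fps_X_power_mult_nth dest: dvd_imp_le)
  qed
  ultimately show "(geom_inv a * (1 - fps_X^a)) $ n = (1::int fps) $ n" by simp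
qed

definition sparse :: "nat \<Rightarrow> int fps \<Rightarrow> bool" where
  "sparse p f \<longleftrightarrow> (\<forall>n. \<not> p dvd n \<longrightarrow> f $ n = 0)"

lemma sparse_mult: assumes "sparse p f" "sparse p g" shows "sparse p (f * g)"
  unfolding sparse_def
proof (intro allI impI)
  fix n assume n: "\<not> p dvd n"
  have "f $ i * g $ (n - i) = 0" if "i \<in> {0..n}" for i
  proof (cases "p dvd i")
    case True
    with n that have "\<not> p dvd (n - i)" using dvd_add by fastforce
    then show ?thesis using assms(2) unfolding sparse_def by simp
  next
    case False then show ?thesis using assms(1) unfolding sparse_def by simp
  qed
  then show "(f * g) $ n = 0" unfolding fps_mult_nth by (intro sum.neutral) blast
qed

lemma sparse_one: "sparse p 1"
  unfolding sparse_def by auto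

lemma sparse_power: "sparse p f \<Longrightarrow> sparse p (f ^ n)"
  by (induction n) (auto intro: sparse_mult sparse_one)

lemma sparse_prod: "(\<And>i. i \<in> I \<Longrightarrow> sparse p (f i)) \<Longrightarrow> sparse p (\<Prod>i\<in>I. f i)"
  by (induction I rule: infinite_finite_induct) (auto intro: sparse_mult sparse_one)

lemma sparse_geom: assumes "i \<ge> 1" shows "sparse p (geom_inv (p^i))"
proof -
  have "p dvd p^i" using assms by (simp add: dvd_power)
  then show ?thesis unfolding sparse_def geom_inv_def using dvd_trans by auto
qed

lemma sparse_E: assumes "i \<ge> 1" shows "sparse p (1 - fps_X^(p^i))"
proof -
  have "p dvd p^i" using assms by (simp add: dvd_power)
  then show ?thesis unfolding sparse_def by (auto simp: fps_X_power_nth)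
qed

lemma coef_oneminus: "i > r \<Longrightarrow> ((1 - fps_X)^r :: int fps) $ i = 0"
proof (induction r arbitrary: i)
  case 0 then show ?case by simp
next
  case (Suc r)
  have eq: "((1 - fps_X)^(Suc r) :: int fps) = (1 - fps_X)^r - fps_X * (1 - fps_X)^r"
    by (simp add: algebra_simps)
  show ?case unfolding eq fps_sub_nth fps_X_mult_nth using Suc by auto
qed

lemma coef_zero:
  assumes s: "sparse p s" and r: "r + 2 \<le> p" and n: "n = p*m + (p-1)"
  shows "((1 - fps_X)^r * s) $ n = 0"
proof -
  have "((1 - fps_X)^r :: int fps) $ i * s $ (n - i) = 0" if "i \<in> {0..n}" for i
  proof (cases "i > r")
    case True then show ?thesis by (simp add: coef_oneminus)
  next
    case False
    hence "n - i = p*m + (p - 1 - i)" using n r by auto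
    moreover have "(p*m + (p - 1 - i)) mod p = p - 1 - i"
    proof -
      define d where "d = p - 1 - i"
      have "d < p" using r unfolding d_def by auto
      hence "(p*m + d) mod p = d" by simp
      thus ?thesis unfolding d_def .
    qed
    moreover have "p - 1 - i \<noteq> 0" using False r by auto
    ultimately have "\<not> p dvd (n - i)" by (metis dvd_eq_mod_eq_0)
    then show ?thesis using s unfolding sparse_def by simp
  qed
  then show ?thesis unfolding fps_mult_nth by (intro sum.neutral) blast
qed
lemma binom_mid:
  fixes b c d :: "'a::comm_ring_1"
  assumes p: "prime p" and dc: "d dvd c"
  shows "of_nat p * d dvd (c + b)^p - b^p - c^p"
proof -
  have p1: "p > 1" using p prime_gt_1_nat by blast
  have "(c+b)^p = (\<Sum>i\<le>p. of_nat (p choose i) * c^i * b^(p-i))" by (rule binomial_ring)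
  also have "{..p} = insert 0 (insert p {1..<p})" using p1 by auto
  also have "(\<Sum>i\<in>insert 0 (insert p {1..<p}). of_nat (p choose i) * c^i * b^(p-i))
     = b^p + (c^p + (\<Sum>i\<in>{1..<p}. of_nat (p choose i) * c^i * b^(p-i)))"
    using p1 by (subst sum.insert; simp)+
  finally have eq: "(c + b)^p - b^p - c^p = (\<Sum>i\<in>{1..<p}. of_nat (p choose i) * c^i * b^(p-i))"
    by (simp add: algebra_simps)
  have "of_nat p * d dvd of_nat (p choose i) * c^i * b^(p-i)" if i: "i \<in> {1..<p}" for i
  proof -
    from i have "p dvd p choose i" using p by (intro dvd_choose_prime) auto
    then obtain t where t: "p choose i = p * t" by blast
    have ci: "c^i = c * c^(i-1)" using i by (cases i) auto
    have "of_nat (p choose i) * c^i * b^(p-i) = (of_nat p * c) * (of_nat t * c^(i-1) * b^(p-i))"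
      by (simp add: t ci algebra_simps)
    moreover have "of_nat p * d dvd of_nat p * c" using dc by (simp add: mult_dvd_mono)
    ultimately show ?thesis by simp
  qed
  then show ?thesis unfolding eq by (intro dvd_sum) auto
qed

lemma lift:
  fixes a b :: "'a::comm_ring_1"
  assumes p: "prime p" and j: "j \<ge> 1" and d: "of_nat (p^j) dvd a - b"
  shows "of_nat (p^(Suc j)) dvd a^p - b^p"
proof -
  have p1: "p > 1" using p prime_gt_1_nat by blast
  have "of_nat p * of_nat (p^j) dvd ((a - b) + b)^p - b^p - (a-b)^p"
    by (rule binom_mid[OF p d])
  hence h1: "of_nat (p^(Suc j)) dvd a^p - b^p - (a-b)^p" by simp
  have "(of_nat (p^j) :: 'a)^p dvd (a-b)^p" using d by (rule dvd_power_same)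
  moreover have "of_nat (p^(Suc j)) dvd ((of_nat (p^j))^p :: 'a)"
  proof -
    have "j * 2 \<le> j * p" using p1 by simp
    hence "Suc j \<le> j * p" using j by linarith
    hence "p^(Suc j) dvd p^(j*p)" by (rule le_imp_power_dvd)
    hence "p^(Suc j) dvd (p^j)^p" by (simp add: power_mult)
    then obtain t where "(p^j)^p = p^(Suc j) * t" by blast
    hence "((of_nat (p^j))^p :: 'a) = of_nat (p^(Suc j)) * of_nat t"
      by (metis of_nat_mult of_nat_power)
    thus ?thesis by simp
  qed
  ultimately have "of_nat (p^(Suc j)) dvd (a-b)^p" using dvd_trans by blast
  with h1 have "of_nat (p^(Suc j)) dvd (a^p - b^p - (a-b)^p) + (a-b)^p" by (rule dvd_add)
  thus ?thesis by simp
qed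

lemma base_cong:
  assumes p: "prime p" and odd: "odd p"
  shows "of_nat p dvd ((1 - fps_X :: int fps)^p - (1 - fps_X^p))"
proof -
  have "of_nat p * 1 dvd ((- fps_X) + 1 :: int fps)^p - 1^p - (- fps_X)^p"
    by (rule binom_mid[OF p]) simp
  moreover have "(- fps_X) ^ p = - (fps_X ^ p :: int fps)" using odd by (simp add: power_minus_odd)
  ultimately show ?thesis by (simp add: algebra_simps)
qed

lemma iter_cong:
  assumes p: "prime p" and odd: "odd p" and v: "v \<ge> 1"
  shows "of_nat (p^v) dvd ((1 - fps_X :: int fps)^(p^v) - (1 - fps_X^p)^(p^(v-1)))"
  using v
proof (induction v rule: dec_induct)
  case base then show ?case using base_cong[OF p odd] by simp
next
  case (step v)
  have "of_nat (p^(Suc v)) dvd (((1 - fps_X :: int fps)^(p^v)))^p - ((1 - fps_X^p)^(p^(v-1)))^p"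
    by (rule lift[OF p step.hyps(1) step.IH])
  moreover have "p^(v-1)*p = p^v" using step.hyps(1)
    by (metis Suc_diff_le diff_Suc_1 power_Suc2)
  ultimately show ?case by (simp add: power_mult[symmetric] power_Suc2 mult.commute)
qed

lemma pow_cong:
  fixes a b :: "'a::comm_ring_1"
  assumes "q dvd a - b" shows "q dvd a^u - b^u"
  using assms by (simp add: power_diff_sumr2)

lemma fps_dvd_nth: assumes "(of_nat q :: int fps) dvd f" shows "int q dvd f $ n"
proof -
  obtain h where "f = of_nat q * h" using assms by blast
  hence "f $ n = int q * h $ n" by (simp flip: fps_of_nat)
  thus ?thesis by simp
qed

lemma alg1:
  fixes a b c e :: "'a::comm_monoid_mult"
  assumes ab: "a*b = 1" and ce: "c*e = 1" and r: "r \<le> k"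
  shows "(a*c)^(k-r) = a^k * (c^k * b^r * e^r)"
proof -
  have "(a*c)^(k-r) = (a*c)^(k-r) * ((a*b)^r * (c*e)^r)" by (simp add: ab ce)
  also have "(a*b)^r * (c*e)^r = (a*c)^r * (b^r*e^r)" by (simp add: power_mult_distrib mult_ac)
  also have "(a*c)^(k-r) * ((a*c)^r * (b^r*e^r)) = ((a*c)^(k-r) * (a*c)^r) * (b^r*e^r)"
    by (simp add: mult_ac)
  also have "(a*c)^(k-r) * (a*c)^r = (a*c)^k" using r by (simp add: power_add[symmetric])
  finally show ?thesis by (simp add: power_mult_distrib mult_ac)
qed

lemma alg2:
  fixes a b g h :: "'a::comm_ring_1"
  assumes ab: "a*b = 1" and gh: "g*h = 1"
  shows "g^m - a^k = a^k * g^m * (b^k - h^m)"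
proof -
  have "a^k * g^m * (b^k - h^m) = g^m * (a*b)^k - a^k * (g*h)^m"
    by (simp add: power_mult_distrib right_diff_distrib mult_ac)
  thus ?thesis by (simp add: ab gh)
qed
lemma alg3:
  fixes a b c e g :: "'a::comm_ring_1"
  shows "a * (c * b * e) - b * (g * c * e) = (a - g) * (c * b * e)"
  by (simp add: algebra_simps)

lemma main_cong:
  assumes p: "prime p" and odd: "odd p" and v: "v \<ge> 1" and k: "k = p^v * u" and r: "r \<le> k"
    and N: "N \<ge> 1"
  defines "F' \<equiv> (\<Prod>i\<in>{1..<N}. geom_inv (p^i))"
    and "E' \<equiv> (\<Prod>i\<in>{1..<N}. (1 - fps_X^(p^i) :: int fps))"
  shows "of_nat (p^v) dvd (partial_prod p N)^(k-r)
            - (1 - fps_X)^r * (geom_inv p ^ (p^(v-1)*u) * F'^k * E'^r)"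
proof -
  have p1: "p \<ge> 1" using prime_gt_1_nat[OF p] by linarith
  define G0 where "G0 = geom_inv 1"
  define G1 where "G1 = geom_inv p"
  define k' where "k' = p^(v-1)*u"
  have "{..<N} = insert 0 {1..<N}" using N by auto
  hence F: "partial_prod p N = G0 * F'"
    unfolding partial_prod_def F'_def G0_def by simp
  have FE: "F' * E' = 1" unfolding F'_def E'_def prod.distrib[symmetric]
  proof (intro prod.neutral ballI)
    fix i assume "i \<in> {1..<N}"
    have "p^i \<ge> 1" using p1 by simp
    then show "geom_inv (p^i) * (1 - fps_X^(p^i)) = 1" by (rule geom_inv_mult)
  qed
  have G0E: "G0 * (1 - fps_X) = 1" unfolding G0_def using geom_inv_mult[of 1] by simp
  have G1E: "G1 * (1 - fps_X^p) = 1" unfolding G1_def using geom_inv_mult[of p] p1 by simp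
  have eq1: "(partial_prod p N)^(k-r) = G0^k * (F'^k * (1 - fps_X)^r * E'^r)"
    unfolding F by (rule alg1[OF G0E FE r])
  have c1: "of_nat (p^v) dvd ((1 - fps_X :: int fps)^(p^v))^u - ((1 - fps_X^p)^(p^(v-1)))^u"
    by (rule pow_cong[OF iter_cong[OF p odd v]])
  hence c2: "of_nat (p^v) dvd (1 - fps_X :: int fps)^k - (1 - fps_X^p)^k'"
    unfolding k k'_def by (simp only: power_mult)
  have "G1^k' - G0^k = G0^k * G1^k' * ((1 - fps_X)^k - (1 - fps_X^p)^k')"
    by (rule alg2[OF G0E G1E])
  note eqG = this
  have "of_nat (p^v) dvd G0^k * G1^k' * ((1 - fps_X)^k - (1 - fps_X^p)^k')"
    using c2 by (rule dvd_mult)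
  hence "of_nat (p^v) dvd G1^k' - G0^k" unfolding eqG[symmetric] .
  hence "of_nat (p^v) dvd - (G1^k' - G0^k)" by (subst dvd_minus_iff)
  hence c3: "of_nat (p^v) dvd G0^k - G1^k'" by (simp only: minus_diff_eq)
  have "(partial_prod p N)^(k-r) - (1 - fps_X)^r * (G1 ^ k' * F'^k * E'^r)
      = (G0^k - G1^k') * (F'^k * (1 - fps_X)^r * E'^r)"
    unfolding eq1 by (rule alg3)
  note eqH = this
  have "of_nat (p^v) dvd (G0^k - G1^k') * (F'^k * (1 - fps_X)^r * E'^r)"
    using c3 by (rule dvd_mult2)
  hence "of_nat (p^v) dvd (partial_prod p N)^(k-r) - (1 - fps_X)^r * (G1 ^ k' * F'^k * E'^r)"
    unfolding eqH .
  then show ?thesis unfolding G1_def k'_def .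
qed

lemma coef_dvd:
  assumes p: "prime p" and odd: "odd p" and v: "v \<ge> 1" and k: "k = p^v * u" and r: "r \<le> k"
    and r2: "r + 2 \<le> p"
  shows "int (p^v) dvd A p (k - r) (p*m + (p-1))"
proof -
  define n where "n = p*m + (p-1)"
  define F' where "F' = (\<Prod>i\<in>{1..<Suc n}. geom_inv (p^i))"
  define E' where "E' = (\<Prod>i\<in>{1..<Suc n}. (1 - fps_X^(p^i) :: int fps))"
  define s where "s = geom_inv p ^ (p^(v-1)*u) * F'^k * E'^r"
  have d: "of_nat (p^v) dvd (partial_prod p (Suc n))^(k-r) - (1 - fps_X)^r * s"
    unfolding s_def F'_def E'_def by (rule main_cong[OF p odd v k r]) simp
  have g1: "sparse p (geom_inv p)" using sparse_geom[of 1 p] by simp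
  have sF: "sparse p F'" unfolding F'_def
    by (rule sparse_prod) (rule sparse_geom, simp)
  have sE: "sparse p E'" unfolding E'_def
    by (rule sparse_prod) (rule sparse_E, simp)
  have "sparse p s" unfolding s_def
    by (intro sparse_mult sparse_power g1 sF sE)
  hence z: "((1 - fps_X)^r * s) $ n = 0" by (rule coef_zero[OF _ r2 n_def])
  have "int (p^v) dvd ((partial_prod p (Suc n))^(k-r) - (1 - fps_X)^r * s) $ n"
    by (rule fps_dvd_nth[OF d])
  hence "int (p^v) dvd ((partial_prod p (Suc n))^(k-r)) $ n"
    using z by (simp only: fps_sub_nth diff_zero)
  thus ?thesis unfolding A_def n_def .
qed

theorem theorem3p2:
  fixes p k r :: nat
  assumes "prime p" and "p \<ge> 3" and "k > 0"
    and "p^2 * (p - 1) dvd k"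
    and "1 \<le> r" and "r \<le> p - 2"
  shows "infinite {n :: nat. n > 0 \<and> nu p (A p (k - r) n) \<ge> nu p (int k)}"
proof -
  have p: "prime p" by fact
  have odd: "odd p" using prime_odd_nat[of p] assms(1,2) by simp
  define v where "v = multiplicity (int p) (int k)"
  have nunit: "\<not> is_unit (int p)" using assms(2) by simp
  have "p dvd p^2 * (p - 1)" by (simp add: power2_eq_square)
  hence "p dvd k" using assms(4) by (rule dvd_trans)
  hence "int p ^ 1 dvd int k" by simp
  hence v1: "v \<ge> 1" unfolding v_def using multiplicity_geI[of "int k" "int p" 1] assms(3) nunit by simp
  have "int p ^ v dvd int k" unfolding v_def by (rule multiplicity_dvd)
  hence "int (p ^ v) dvd int k" by (simp only: of_nat_power)
  hence "p ^ v dvd k" by (simp only: int_dvd_int_iff)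
  then obtain u where k: "k = p^v * u" by blast
  have r2: "r + 2 \<le> p" using assms(2,6) by linarith
  have "p \<le> k" by (rule dvd_imp_le[OF \<open>p dvd k\<close> assms(3)])
  hence rk: "r \<le> k" using r2 by linarith
  have nuk: "nu p (int k) = enat v" unfolding nu_def v_def using assms(3) by simp
  have mem: "p*m + (p-1) \<in> {n :: nat. n > 0 \<and> nu p (A p (k - r) n) \<ge> nu p (int k)}" for m
  proof -
    define a where "a = A p (k - r) (p*m + (p-1))"
    have "int (p ^ v) dvd a" unfolding a_def by (rule coef_dvd[OF p odd v1 k rk r2])
    hence dv: "int p ^ v dvd a" by (simp only: of_nat_power)
    have "enat v \<le> nu p a"
    proof (cases "a = 0")
      case True then show ?thesis unfolding nu_def by simp
    next
      case False
      have "v \<le> multiplicity (int p) a" by (rule multiplicity_geI[OF False nunit dv])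
      then show ?thesis unfolding nu_def using False by simp
    qed
    moreover have "p*m + (p-1) > 0" using assms(2) by simp
    ultimately show ?thesis unfolding nuk a_def by simp
  qed
  show ?thesis unfolding infinite_nat_iff_unbounded_le
  proof
    fix m
    have "m \<le> p*m" using assms(2) by simp
    hence "m \<le> p*m + (p-1)" by linarith
    with mem[of m] show "\<exists>n\<ge>m. n \<in> {n :: nat. n > 0 \<and> nu p (A p (k - r) n) \<ge> nu p (int k)}" by blast
  qed
qed

end
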